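(* Let $m\ge 2$ and let $\tau=\tau_1\tau_2\cdots\tau_k$ be a partition with exactly $m$ blocks such that $\tau_i=i$ for each $i\in[m-1]$. Then \[\sum_{n\ge0}p_n(12\cdots(m+1),\tau)x^n=\sum_{n\ge0}p_n(12\cdots(m+1))x^n-\left(\frac{x}{1-(m-1)x}\right)^{k-m}\frac{x}{1-mx}\prod_{j=1}^{m-1}\frac{x}{1-jx}.\] In particular this generating function depends only on $k$ and $m$, not on $\tau$ itself.
   Context: Set partitions of $[n]$ are represented by canonical sequential forms (restricted growth words): $\pi=\pi_1\cdots\pi_n$ with $\pi_1=1$, $\pi_{i+1}\le\max(\pi_1,\dots,\pi_i)+1$, where $\pi_j$ is the index of the block containing $j$ and blocks are ordered by their minima; the empty partition is the unique partition of $[0]$. $\pi$ contains a pattern $\tau$ if some subsequence of $\pi$ is order-isomorphic to $\tau$, and avoids it otherwise. $p_n(T)$ denotes the number of partitions of $[n]$ avoiding all patterns in $T$. *)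

theory Defs
  imports "HOL-Computational_Algebra.Formal_Power_Series"
begin

text \<open>Restricted growth words (canonical sequential forms) of set partitions.\<close>
definition rgf :: "nat list \<Rightarrow> bool" where
  "rgf xs \<longleftrightarrow> (\<forall>x\<in>set xs. 1 \<le> x) \<and> (xs \<noteq> [] \<longrightarrow> xs ! 0 = 1) \<and>
     (\<forall>i. Suc i < length xs \<longrightarrow> xs ! Suc i \<le> Max (set (take (Suc i) xs)) + 1)"

definition num_blocks :: "nat list \<Rightarrow> nat" where
  "num_blocks xs = (if xs = [] then 0 else Max (set xs))"

definition contains :: "nat list \<Rightarrow> nat list \<Rightarrow> bool" where
  "contains p tau \<longleftrightarrow> (\<exists>f. strict_mono_on {..<length tau} f \<and>
       (\<forall>i<length tau. f i < length p) \<and>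
       (\<forall>i<length tau. \<forall>j<length tau.
          (p ! f i < p ! f j \<longleftrightarrow> tau ! i < tau ! j) \<and>
          (p ! f i = p ! f j \<longleftrightarrow> tau ! i = tau ! j)))"

definition avoids :: "nat list \<Rightarrow> nat list set \<Rightarrow> bool" where
  "avoids p T \<longleftrightarrow> (\<forall>tau\<in>T. \<not> contains p tau)"

definition pcount :: "nat \<Rightarrow> nat list set \<Rightarrow> nat" where
  "pcount n T = card {p. rgf p \<and> length p = n \<and> avoids p T}"

definition pgf :: "nat list set \<Rightarrow> rat fps" where
  "pgf T = Abs_fps (\<lambda>n. of_nat (pcount n T))"

end

theory Submission
  imports Defs "HOL-Library.Sublist"
begin

unbundle fps_syntax


fun cont :: "nat \<Rightarrow> nat list \<Rightarrow> bool" where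
  "cont j [] = True"
| "cont j (a#w) = (1 \<le> a \<and> a \<le> Suc j \<and> cont (max j a) w)"

lemma num_blocks_Cons: "num_blocks (a#t) = max a (num_blocks t)"
  by (cases "t = []") (auto simp: num_blocks_def Max_insert)

lemma num_blocks_Nil[simp]: "num_blocks [] = 0" by (simp add: num_blocks_def)

lemma cont_nth: "cont j w \<longleftrightarrow> (\<forall>i<length w. 1 \<le> w!i \<and> w!i \<le> Suc (max j (num_blocks (take i w))))"
proof (induction w arbitrary: j)
  case Nil then show ?case by simp
next
  case (Cons a w)
  show ?case
    by (simp add: Cons.IH All_less_Suc2 num_blocks_Cons max.assoc)
qed

lemma rgf_cont: "rgf p \<longleftrightarrow> cont 0 p"
proof -
  have A: "num_blocks (take (Suc i) p) = Max (set (take (Suc i) p))" if "Suc i < length p" for i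
    using that by (auto simp: num_blocks_def)
  show ?thesis
  proof
    assume r: "rgf p"
    show "cont 0 p" unfolding cont_nth
    proof (intro allI impI)
      fix i assume i: "i < length p"
      have "1 \<le> p!i" using r i nth_mem unfolding rgf_def by blast
      moreover have "p!i \<le> Suc (max 0 (num_blocks (take i p)))"
      proof (cases i)
        case 0 then show ?thesis using r i unfolding rgf_def by auto
      next
        case (Suc i') then show ?thesis using r i A[of i'] unfolding rgf_def by auto
      qed
      ultimately show "1 \<le> p!i \<and> p!i \<le> Suc (max 0 (num_blocks (take i p)))" by blast
    qed
  next
    assume c: "cont 0 p"
    then have c': "\<forall>i<length p. 1 \<le> p!i \<and> p!i \<le> Suc (num_blocks (take i p))"
      unfolding cont_nth by simp
    show "rgf p" unfolding rgf_def
    proof (intro conjI impI allI ballI)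
      fix x assume "x \<in> set p" then show "1 \<le> x" using c' by (auto simp: in_set_conv_nth)
    next
      assume "p \<noteq> []" then show "p!0 = 1" using c'[rule_format, of 0] by auto
    next
      fix i assume "Suc i < length p" then show "p ! Suc i \<le> Max (set (take (Suc i) p)) + 1"
        using c'[rule_format, of "Suc i"] A[of i] by auto
    qed
  qed
qed

lemma cont_bound: "cont j w \<Longrightarrow> x \<in> set w \<Longrightarrow> x \<le> j + length w"
proof (induction w arbitrary: j)
  case Nil then show ?case by simp
next
  case (Cons a w)
  then show ?case by (auto simp: max_def split: if_splits) (fastforce+)
qed

lemma cont_all: "m - 1 \<le> j \<Longrightarrow> set w \<subseteq> {1..m} \<Longrightarrow> cont j w"
  by (induction w arbitrary: j) auto

lemma cont_surj: "cont j w \<Longrightarrow> 1 \<le> v \<Longrightarrow> v \<le> max j (num_blocks w) \<Longrightarrow> v \<le> j \<or> v \<in> set w"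
proof (induction w arbitrary: j)
  case Nil then show ?case by simp
next
  case (Cons a w)
  have "v \<le> max (max j a) (num_blocks w)" using Cons.prems by (simp add: num_blocks_Cons max.assoc)
  then have "v \<le> max j a \<or> v \<in> set w" using Cons by simp
  then show ?case using Cons.prems by auto
qed

lemma cont_sub: "cont j w \<Longrightarrow> j \<le> c \<Longrightarrow> (\<exists>x\<in>set w. c < x) \<Longrightarrow> subseq [Suc j..<c+2] w"
proof (induction w arbitrary: j)
  case Nil then show ?case by simp
next
  case (Cons a w)
  show ?case
  proof (cases "a = Suc j")
    case True
    show ?thesis
    proof (cases "j = c")
      case True then show ?thesis using \<open>a = Suc j\<close> by simp
    next
      case False
      then have jc: "Suc j \<le> c" using Cons.prems by simp
      have "\<exists>x\<in>set w. c < x" using Cons.prems True jc by auto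
      then have "subseq [Suc (Suc j)..<c+2] w" using Cons.IH[of "Suc j"] Cons.prems True jc by simp
      moreover have "[Suc j..<c+2] = Suc j # [Suc (Suc j)..<c+2]" using jc by (simp add: upt_conv_Cons)
      ultimately show ?thesis using True by simp
    qed
  next
    case False
    then have aj: "a \<le> j" using Cons.prems by simp
    have "\<exists>x\<in>set w. c < x" using Cons.prems aj by auto
    then have "subseq [Suc j..<c+2] w" using Cons.IH[of j] Cons.prems aj by (simp add: max_def)
    then show ?thesis by (simp add: list_emb_Cons)
  qed
qed



lemma subseq_idx: "subseq u p \<Longrightarrow> \<exists>f. strict_mono_on {..<length u} f \<and> (\<forall>i<length u. f i < length p \<and> p!f i = u!i)"
proof (induction p arbitrary: u)
  case Nil then show ?case by (auto dest: list_emb_Nil2 simp: monotone_on_def)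
next
  case (Cons b p)
  show ?case
  proof (cases u)
    case Nil then show ?thesis by (auto simp: monotone_on_def)
  next
    case (Cons a u')
    show ?thesis
    proof (cases "a = b")
      case True
      then have "subseq u' p" using Cons.prems Cons by simp
      then obtain f where f: "strict_mono_on {..<length u'} f" "\<forall>i<length u'. f i < length p \<and> p!f i = u'!i"
        using Cons.IH by blast
      define g where "g i = (case i of 0 \<Rightarrow> 0 | Suc i \<Rightarrow> Suc (f i))" for i
      have "strict_mono_on {..<length u} g"
      proof (rule strict_mono_onI)
        fix x y assume "x \<in> {..<length u}" "y \<in> {..<length u}" "x < y"
        then show "g x < g y" using f(1) Cons
          by (cases x; cases y) (auto simp: g_def monotone_on_def)
      qed
      moreover have "\<forall>i<length u. g i < length (b#p) \<and> (b#p)!g i = u!i"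
        using f(2) Cons True by (auto simp: g_def nth_Cons split: nat.splits)
      ultimately show ?thesis by blast
    next
      case False
      then have "subseq u p" using Cons.prems Cons by simp
      then obtain f where f: "strict_mono_on {..<length u} f" "\<forall>i<length u. f i < length p \<and> p!f i = u!i"
        using Cons.IH by blast
      have "strict_mono_on {..<length u} (Suc \<circ> f)" using f(1) by (auto simp: monotone_on_def)
      moreover have "\<forall>i<length u. (Suc \<circ> f) i < length (b#p) \<and> (b#p)!((Suc \<circ> f) i) = u!i"
        using f(2) by auto
      ultimately show ?thesis by blast
    qed
  qed
qed

lemma idx_subseq: "strict_mono_on {..<length u} f \<Longrightarrow> \<forall>i<length u. f i < length p \<and> p!f i = u!i \<Longrightarrow> subseq u p"
proof (induction p arbitrary: u f)
  case Nil then show ?case by (cases u) auto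
next
  case (Cons b p)
  show ?case
  proof (cases u)
    case Nil then show ?thesis by simp
  next
    case (Cons a u')
    have mono: "f i < f j" if "i < j" "j < length u" for i j
      using Cons.prems(1) that by (auto intro: strict_mono_onD)
    show ?thesis
    proof (cases "f 0 = 0")
      case True
      have ab: "a = b" using Cons.prems(2) Cons True by force
      define g where "g i = f (Suc i) - 1" for i
      have pos: "f (Suc i) > 0" if "i < length u'" for i using mono[of 0 "Suc i"] that Cons True by simp
      have "strict_mono_on {..<length u'} g"
      proof (rule strict_mono_onI)
        fix x y assume "x \<in> {..<length u'}" "y \<in> {..<length u'}" "x < y"
        then show "g x < g y" using mono[of "Suc x" "Suc y"] pos[of x] pos[of y] Cons by (auto simp: g_def)
      qed
      moreover have "\<forall>i<length u'. g i < length p \<and> p!g i = u'!i"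
      proof (intro allI impI)
        fix i assume i: "i < length u'"
        have "f (Suc i) < length (b#p)" "(b#p)!f (Suc i) = u!Suc i" using Cons.prems(2) i Cons by auto
        then show "g i < length p \<and> p!g i = u'!i" using pos[OF i] Cons unfolding g_def
          by (cases "f (Suc i)") auto
      qed
      ultimately have "subseq u' p" using Cons.IH by blast
      then show ?thesis using Cons ab by simp
    next
      case False
      define g where "g i = f i - 1" for i
      have pos: "f i > 0" if "i < length u" for i using mono[of 0 i] that False by (cases i) auto
      have "strict_mono_on {..<length u} g"
      proof (rule strict_mono_onI)
        fix x y assume "x \<in> {..<length u}" "y \<in> {..<length u}" "x < y"
        then show "g x < g y" using mono[of x y] pos[of x] pos[of y] by (auto simp: g_def)
      qed
      moreover have "\<forall>i<length u. g i < length p \<and> p!g i = u!i"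
      proof (intro allI impI)
        fix i assume i: "i < length u"
        have "f i < length (b#p)" "(b#p)!f i = u!i" using Cons.prems(2) i by auto
        then show "g i < length p \<and> p!g i = u!i" using pos[OF i] unfolding g_def
          by (cases "f i") auto
      qed
      ultimately have "subseq u p" using Cons.IH by blast
      then show ?thesis by (simp add: list_emb_Cons)
    qed
  qed
qed

lemma subseq_contains: "subseq u p \<Longrightarrow> contains p u"
  unfolding contains_def using subseq_idx[of u p] by metis

lemma not_contains_upt:
  assumes "set p \<subseteq> {1..m}" shows "\<not> contains p [1..<m+2]"
proof
  assume "contains p [1..<m+2]"
  then obtain f where f1: "\<forall>i<length [1..<m+2]. f i < length p"
    and f2: "\<forall>i<length [1..<m+2]. \<forall>j<length [1..<m+2]. (p ! f i < p ! f j \<longleftrightarrow> [1..<m+2] ! i < [1..<m+2] ! j)"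
    unfolding contains_def by blast
  have len: "length [1..<m+2] = m+1" by simp
  have nth: "[1..<m+2]!i = Suc i" if "i < m+1" for i using that by (simp del: upt_Suc)
  have f: "\<forall>i<m+1. f i < length p" using f1 len by simp
  have lt: "p!f i < p!f (Suc i)" if "i < m" for i using f2 that len nth[of i] nth[of "Suc i"] by auto
  have "\<forall>i\<le>m. Suc i \<le> p!f i"
  proof (intro allI impI)
    fix i assume "i \<le> m" then show "Suc i \<le> p!f i"
    proof (induction i)
      case 0 then show ?case using f(1) assms nth_mem[of "f 0" p] by force
    next
      case (Suc i) then show ?case using lt[of i] by simp
    qed
  qed
  then have "Suc m \<le> p!f m" by simp
  moreover have "p!f m \<in> set p" using f(1) by simp
  ultimately show False using assms by force
qed

lemma contains_upt:
  assumes "rgf p" "\<not> set p \<subseteq> {1..m}" shows "contains p [1..<m+2]"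
proof -
  have c: "cont 0 p" using assms rgf_cont by blast
  have "\<forall>x\<in>set p. 1 \<le> x" using assms unfolding rgf_def by blast
  then have "\<exists>x\<in>set p. m < x" using assms(2) by force
  then have "subseq [Suc 0..<m+2] p" using cont_sub[OF c, of m] by simp
  then show ?thesis using subseq_contains by simp
qed

lemma contains_subseq:
  assumes sp: "set p \<subseteq> {1..m}" and su: "set u = {1..m}" and c: "contains p u"
  shows "subseq u p"
proof -
  obtain f where f: "strict_mono_on {..<length u} f" "\<forall>i<length u. f i < length p"
    "\<forall>i<length u. \<forall>j<length u. (p ! f i < p ! f j \<longleftrightarrow> u ! i < u ! j)"
    using c unfolding contains_def by blast
  have pin: "p!f i \<in> {1..m}" if "i < length u" for i using f(2) that sp nth_mem by blast
  have uin: "u!i \<in> {1..m}" if "i < length u" for i using that su nth_mem by blast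
  have ex: "\<exists>j<length u. u!j = v" if "v \<in> {1..m}" for v
    using that su by (metis in_set_conv_nth)
  have up: "\<forall>i<length u. u!i = v \<longrightarrow> v \<le> p!f i" for v
  proof (induction v)
    case 0 then show ?case by simp
  next
    case (Suc v)
    show ?case
    proof (intro allI impI)
      fix i assume i: "i < length u" "u!i = Suc v"
      show "Suc v \<le> p!f i"
      proof (cases "v = 0")
        case True then show ?thesis using pin[OF i(1)] by simp
      next
        case False
        then have "v \<in> {1..m}" using uin[OF i(1)] i(2) by auto
        then obtain j where j: "j < length u" "u!j = v" using ex by blast
        then have "p!f j < p!f i" using f(3) i by auto
        moreover have "v \<le> p!f j" using Suc j by blast
        ultimately show ?thesis by simp
      qed
    qed
  qed
  have down: "\<forall>i<length u. u!i + d = m \<longrightarrow> p!f i \<le> u!i" for d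
  proof (induction d)
    case 0 then show ?case using pin by auto
  next
    case (Suc d)
    show ?case
    proof (intro allI impI)
      fix i assume i: "i < length u" "u!i + Suc d = m"
      then have "Suc (u!i) \<in> {1..m}" by auto
      then obtain j where j: "j < length u" "u!j = Suc (u!i)" using ex by blast
      then have "p!f i < p!f j" using f(3) i by auto
      moreover have "p!f j \<le> u!j" using Suc j i by auto
      ultimately show "p!f i \<le> u!i" using j by simp
    qed
  qed
  have "\<forall>i<length u. f i < length p \<and> p!f i = u!i"
  proof (intro allI impI)
    fix i assume i: "i < length u"
    have "u!i + (m - u!i) = m" using uin[OF i] by auto
    then have a: "p!f i \<le> u!i" using down[of "m - u!i"] i by blast
    have b: "u!i \<le> p!f i" using up[of "u!i"] i by blast
    from a b have "p!f i = u!i" by simp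
    then show "f i < length p \<and> p!f i = u!i" using f(2) i by blast
  qed
  then show ?thesis using idx_subseq f(1) by blast
qed



lemma card_split:
  assumes fin: "finite A"
  shows "card {w. length w = Suc n \<and> set w \<subseteq> A \<and> P w} =
         (\<Sum>a\<in>A. card {w. length w = n \<and> set w \<subseteq> A \<and> P (a#w)})"
proof -
  let ?B = "\<lambda>a. {w. length w = n \<and> set w \<subseteq> A \<and> P (a#w)}"
  have eq: "{w. length w = Suc n \<and> set w \<subseteq> A \<and> P w} = (\<Union>a\<in>A. (Cons a) ` ?B a)"
  proof
    show "{w. length w = Suc n \<and> set w \<subseteq> A \<and> P w} \<subseteq> (\<Union>a\<in>A. (Cons a) ` ?B a)"
    proof
      fix w assume "w \<in> {w. length w = Suc n \<and> set w \<subseteq> A \<and> P w}"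
      then obtain a w' where "w = a#w'" "length w' = n" "a \<in> A" "set w' \<subseteq> A" "P (a#w')"
        by (cases w) auto
      then show "w \<in> (\<Union>a\<in>A. (Cons a) ` ?B a)" by blast
    qed
  qed auto
  have finB: "finite (?B a)" for a
    by (rule finite_subset[OF _ finite_lists_length_eq[OF fin, of n]]) auto
  have "card (\<Union>a\<in>A. (Cons a) ` ?B a) = (\<Sum>a\<in>A. card ((Cons a) ` ?B a))"
    by (rule card_UN_disjoint) (use fin finB in auto)
  also have "\<dots> = (\<Sum>a\<in>A. card (?B a))"
    by (rule sum.cong) (auto intro: card_image inj_onI)
  finally show ?thesis using eq by simp
qed

definition W :: "nat \<Rightarrow> nat list \<Rightarrow> nat \<Rightarrow> nat list set" where
  "W m u n = {w. length w = n \<and> set w \<subseteq> {1..m} \<and> subseq u w}"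

definition S :: "nat \<Rightarrow> nat \<Rightarrow> nat list \<Rightarrow> nat \<Rightarrow> nat list set" where
  "S m j u n = {w. length w = n \<and> set w \<subseteq> {1..m} \<and> cont j w \<and> subseq u w}"

lemma W_Nil: "card (W m [] n) = m ^ n"
proof -
  have "W m [] n = {xs. set xs \<subseteq> {1..m} \<and> length xs = n}" by (auto simp: W_def)
  then show ?thesis by (simp add: card_lists_length_eq)
qed

lemma W_Cons_0: "card (W m (a#u) 0) = 0"
  by (simp add: W_def)

lemma S_Cons_0: "card (S m j (a#u) 0) = 0"
  by (simp add: S_def)

lemma W_Cons_Suc:
  assumes a: "a \<in> {1..m}"
  shows "card (W m (a#u) (Suc n)) = card (W m u n) + (m - 1) * card (W m (a#u) n)"
proof -
  have "card (W m (a#u) (Suc n)) =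
     (\<Sum>b\<in>{1..m}. card {w. length w = n \<and> set w \<subseteq> {1..m} \<and> subseq (a#u) (b#w)})"
    unfolding W_def by (rule card_split) simp
  also have "\<dots> = (\<Sum>b\<in>{1..m}. if b = a then card (W m u n) else card (W m (a#u) n))"
    by (rule sum.cong) (auto simp: W_def)
  also have "\<dots> = card (W m u n) + (\<Sum>b\<in>{1..m} - {a}. if b = a then card (W m u n) else card (W m (a#u) n))"
    using a by (subst sum.remove[of _ a]) auto
  also have "(\<Sum>b\<in>{1..m} - {a}. if b = a then card (W m u n) else card (W m (a#u) n)) =
      (\<Sum>b\<in>{1..m} - {a}. card (W m (a#u) n))"
    by (rule sum.cong) auto
  also have "\<dots> = (m - 1) * card (W m (a#u) n)" using a by simp
  finally show ?thesis .
qed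

lemma sum_ifs:
  "j < m \<Longrightarrow> (\<Sum>b\<in>{1..m}. (if b \<le> j then X else if b = Suc j then Y else (0::nat))) = j * X + Y"
proof (induction m)
  case 0 then show ?case by simp
next
  case (Suc m)
  show ?case
  proof (cases "j = m")
    case True
    have "(\<Sum>b\<in>{1..j}. (if b \<le> j then X else if b = Suc j then Y else (0::nat))) = (\<Sum>b\<in>{1..j}. X)"
      by (rule sum.cong) auto
    then show ?thesis using True by (simp add: sum.cl_ivl_Suc)
  next
    case False
    then show ?thesis using Suc by (simp add: sum.cl_ivl_Suc)
  qed
qed

lemma S_top: "m - 1 \<le> j \<Longrightarrow> S m j u n = W m u n"
  unfolding S_def W_def using cont_all by blast

lemma S_Cons_Suc:
  assumes j: "Suc j < m"
  shows "card (S m j (Suc j # u) (Suc n)) = j * card (S m j (Suc j # u) n) + card (S m (Suc j) u n)"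
proof -
  have "card (S m j (Suc j # u) (Suc n)) =
     (\<Sum>b\<in>{1..m}. card {w. length w = n \<and> set w \<subseteq> {1..m} \<and> (cont j (b#w) \<and> subseq (Suc j # u) (b#w))})"
    unfolding S_def by (rule card_split) simp
  also have "\<dots> = (\<Sum>b\<in>{1..m}. (if b \<le> j then card (S m j (Suc j # u) n) else if b = Suc j then card (S m (Suc j) u n) else 0))"
  proof (rule sum.cong)
    fix b assume b: "b \<in> {1..m}"
    show "card {w. length w = n \<and> set w \<subseteq> {1..m} \<and> (cont j (b#w) \<and> subseq (Suc j # u) (b#w))} =
      (if b \<le> j then card (S m j (Suc j # u) n) else if b = Suc j then card (S m (Suc j) u n) else 0)"
    proof (cases "b \<le> j")
      case True
      then have "max j b = j" "b \<noteq> Suc j" by auto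
      then have "{w. length w = n \<and> set w \<subseteq> {1..m} \<and> (cont j (b#w) \<and> subseq (Suc j # u) (b#w))} = S m j (Suc j # u) n"
        using b True by (auto simp: S_def)
      then show ?thesis using True by simp
    next
      case False
      show ?thesis
      proof (cases "b = Suc j")
        case True
        then have "{w. length w = n \<and> set w \<subseteq> {1..m} \<and> (cont j (b#w) \<and> subseq (Suc j # u) (b#w))} = S m (Suc j) u n"
          by (auto simp: S_def)
        then show ?thesis using True by simp
      next
        case False
        then have "{w. length w = n \<and> set w \<subseteq> {1..m} \<and> (cont j (b#w) \<and> subseq (Suc j # u) (b#w))} = {}"
          using \<open>\<not> b \<le> j\<close> by auto
        then show ?thesis using False \<open>\<not> b \<le> j\<close> by simp
      qed
    qed
  qed simp
  also have "\<dots> = j * card (S m j (Suc j # u) n) + card (S m (Suc j) u n)"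
    using j by (intro sum_ifs) simp
  finally show ?thesis .
qed




lemma coeff_lin:
  "((1 - of_nat c * fps_X) * (F :: rat fps)) $ n = F $ n - (if n = 0 then 0 else of_nat c * F $ (n - 1))"
proof -
  have "(1 - of_nat c * fps_X) * F = F - fps_const (of_nat c) * (fps_X * F)"
    by (simp add: algebra_simps fps_of_nat)
  then show ?thesis by simp
qed

lemma D_unit: "(1 - of_nat c * fps_X :: rat fps) $ 0 \<noteq> 0" by simp

lemma cancel_lin:
  assumes "(1 - of_nat c * fps_X) * F = fps_X * (G :: rat fps)"
  shows "F = fps_X / (1 - of_nat c * fps_X) * G"
proof -
  let ?D = "1 - of_nat c * fps_X :: rat fps"
  have "F = (inverse ?D * ?D) * F" using inverse_mult_eq_1[OF D_unit] by simp
  also have "\<dots> = inverse ?D * (fps_X * G)" using assms by (simp add: mult.assoc)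
  also have "\<dots> = fps_X / ?D * G" by (subst fps_divide_unit[OF D_unit]) (simp add: ac_simps)
  finally show ?thesis .
qed

lemma cancel_one:
  assumes "(1 - of_nat c * fps_X) * F = (1 :: rat fps)"
  shows "F = inverse (1 - of_nat c * fps_X)"
proof -
  let ?D = "1 - of_nat c * fps_X :: rat fps"
  have "F = (inverse ?D * ?D) * F" using inverse_mult_eq_1[OF D_unit] by simp
  also have "\<dots> = inverse ?D" using assms by (simp add: mult.assoc)
  finally show ?thesis .
qed

definition Wf :: "nat \<Rightarrow> nat list \<Rightarrow> rat fps" where
  "Wf m u = Abs_fps (\<lambda>n. of_nat (card (W m u n)))"

lemma Wf_Nil: "Wf m [] = inverse (1 - of_nat m * fps_X)"
proof (rule cancel_one, rule fps_ext)
  fix n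
  show "((1 - of_nat m * fps_X) * Wf m []) $ n = (1 :: rat fps) $ n"
    by (cases n) (simp_all add: coeff_lin Wf_def W_Nil)
qed

lemma Wf_Cons: assumes "a \<in> {1..m}" shows "Wf m (a#u) = fps_X / (1 - of_nat (m-1) * fps_X) * Wf m u"
proof (rule cancel_lin, rule fps_ext)
  fix n
  show "((1 - of_nat (m-1) * fps_X) * Wf m (a#u)) $ n = (fps_X * Wf m u) $ n"
    by (cases n) (simp_all add: coeff_lin Wf_def W_Cons_0 W_Cons_Suc[OF assms])
qed

lemma Wf_formula: "set u \<subseteq> {1..m} \<Longrightarrow>
   Wf m u = (fps_X / (1 - of_nat (m-1) * fps_X)) ^ length u * inverse (1 - of_nat m * fps_X)"
  by (induction u) (simp_all add: Wf_Nil Wf_Cons mult.assoc)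

definition Tf :: "nat \<Rightarrow> nat list \<Rightarrow> nat \<Rightarrow> rat fps" where
  "Tf m v j = Abs_fps (\<lambda>n. of_nat (card (S m j ([Suc j..<m] @ v) n)))"

lemma Tf_step:
  assumes "Suc j < m"
  shows "Tf m v j = fps_X / (1 - of_nat j * fps_X) * Tf m v (Suc j)"
proof -
  have u: "[Suc j..<m] @ v = Suc j # ([Suc (Suc j)..<m] @ v)" using assms by (simp add: upt_conv_Cons)
  show ?thesis
  proof (rule cancel_lin, rule fps_ext)
    fix n
    show "((1 - of_nat j * fps_X) * Tf m v j) $ n = (fps_X * Tf m v (Suc j)) $ n"
      by (cases n) (simp_all add: coeff_lin Tf_def u S_Cons_0 S_Cons_Suc[OF assms])
  qed
qed

lemma Tf_top: "m \<ge> 1 \<Longrightarrow> Tf m v (m - 1) = Wf m v"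
  by (simp add: Tf_def Wf_def S_top)

lemma Tf_formula:
  assumes "m \<ge> 1" "j \<le> m - 1"
  shows "Tf m v j = (\<Prod>i\<in>{j..<m-1}. fps_X / (1 - of_nat i * fps_X)) * Wf m v"
  using assms(2)
proof (induction j rule: inc_induct)
  case base then show ?case using Tf_top[OF assms(1)] by simp
next
  case (step k)
  then show ?case using Tf_step[of k m v] by (simp add: prod.atLeast_Suc_lessThan mult.assoc)
qed



lemma fin_rgf: "finite {p. rgf p \<and> length p = n \<and> Q p}"
proof (rule finite_subset[OF _ finite_lists_length_eq[of "{0..n}" n]])
  show "{p. rgf p \<and> length p = n \<and> Q p} \<subseteq> {xs. set xs \<subseteq> {0..n} \<and> length xs = n}"
  proof
    fix p assume "p \<in> {p. rgf p \<and> length p = n \<and> Q p}"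
    then have "cont 0 p" "length p = n" using rgf_cont by auto
    then show "p \<in> {xs. set xs \<subseteq> {0..n} \<and> length xs = n}" using cont_bound[of 0 p] by auto
  qed
qed simp

lemma rearr: "(x::'a::comm_ring_1) * p * (a * b) * d = a * (x * d) * (p * b)"
  by (simp add: ac_simps)

theorem theorem2p8:
  fixes m :: nat and tau :: "nat list"
  assumes "m \<ge> 2"
    and "rgf tau"
    and "num_blocks tau = m"
    and "\<forall>i\<in>{1..m-1}. tau ! (i - 1) = i"
  shows "pgf {[1..<m+2], tau} =
           pgf {[1..<m+2]}
           - (fps_X / (1 - of_nat (m - 1) * fps_X)) ^ (length tau - m)
             * (fps_X / (1 - of_nat m * fps_X))
             * (\<Prod>j\<in>{1..m-1}. fps_X / (1 - of_nat j * fps_X))"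
proof -
  note m2 = assms(1)
  define A where "A = [1..<m+2]"
  have ne: "tau \<noteq> []" using assms(3) m2 by (auto simp: num_blocks_def)
  have ct: "cont 0 tau" using assms(2) rgf_cont by blast
  have ge1: "\<forall>x\<in>set tau. 1 \<le> x" using assms(2) unfolding rgf_def by blast
  have lem: "\<forall>x\<in>set tau. x \<le> m" using assms(3) ne by (auto simp: num_blocks_def)
  have "{1..m} \<subseteq> set tau"
  proof
    fix v assume "v \<in> {1..m}"
    then show "v \<in> set tau" using cont_surj[OF ct, of v] assms(3) by auto
  qed
  then have st: "set tau = {1..m}" using ge1 lem by auto
  have "m \<le> length tau" using card_length[of tau] st by simp
  define v where "v = drop (m-1) tau"
  have tk: "take (m-1) tau = [1..<m]"
  proof (rule nth_equalityI)
    show "length (take (m-1) tau) = length [1..<m]" using \<open>m \<le> length tau\<close> by simp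
    fix i assume "i < length (take (m-1) tau)"
    then have i: "i < m - 1" by simp
    have "Suc i \<in> {1..m-1}" using i by simp
    then have "tau ! ((Suc i) - 1) = Suc i" using assms(4) by blast
    then show "take (m-1) tau ! i = [1..<m] ! i" using i by simp
  qed
  have tau_eq: "tau = [Suc 0..<m] @ v" unfolding v_def using tk
    by (metis One_nat_def append_take_drop_id)
  have lv: "length v = Suc (length tau - m)" unfolding v_def using \<open>m \<le> length tau\<close> m2 by simp
  have sv: "set v \<subseteq> {1..m}" unfolding v_def using st by (metis set_drop_subset)
  have seteq: "{p. rgf p \<and> length p = n \<and> avoids p {A}} - {p. rgf p \<and> length p = n \<and> avoids p {A, tau}}
      = S m 0 tau n" for n
  proof
    show "{p. rgf p \<and> length p = n \<and> avoids p {A}} - {p. rgf p \<and> length p = n \<and> avoids p {A, tau}} \<subseteq> S m 0 tau n"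
    proof
      fix p assume p: "p \<in> {p. rgf p \<and> length p = n \<and> avoids p {A}} - {p. rgf p \<and> length p = n \<and> avoids p {A, tau}}"
      then have r: "rgf p" "length p = n" "\<not> contains p A" "contains p tau" by (auto simp: avoids_def)
      have sp: "set p \<subseteq> {1..m}" using contains_upt[OF r(1)] r(3) unfolding A_def by blast
      have "subseq tau p" using contains_subseq[OF sp st r(4)] .
      then show "p \<in> S m 0 tau n" using r sp rgf_cont unfolding S_def by blast
    qed
  next
    show "S m 0 tau n \<subseteq> {p. rgf p \<and> length p = n \<and> avoids p {A}} - {p. rgf p \<and> length p = n \<and> avoids p {A, tau}}"
    proof
      fix p assume "p \<in> S m 0 tau n"
      then have r: "length p = n" "set p \<subseteq> {1..m}" "cont 0 p" "subseq tau p" unfolding S_def by auto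
      have "rgf p" using r(3) rgf_cont by blast
      moreover have "\<not> contains p A" using not_contains_upt[OF r(2)] unfolding A_def .
      moreover have "contains p tau" using subseq_contains[OF r(4)] .
      ultimately show "p \<in> {p. rgf p \<and> length p = n \<and> avoids p {A}} - {p. rgf p \<and> length p = n \<and> avoids p {A, tau}}"
        using r(1) by (auto simp: avoids_def)
    qed
  qed
  have fin: "finite {p. rgf p \<and> length p = n \<and> avoids p {A, tau}}" for n
    by (rule fin_rgf)
  have sub: "{p. rgf p \<and> length p = n \<and> avoids p {A, tau}} \<subseteq> {p. rgf p \<and> length p = n \<and> avoids p {A}}" for n
    by (auto simp: avoids_def)
  have cnt: "of_nat (pcount n {A, tau}) = (of_nat (pcount n {A}) :: rat) - of_nat (card (S m 0 tau n))" for n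
  proof -
    have "card (S m 0 tau n) = pcount n {A} - pcount n {A, tau}"
      unfolding pcount_def seteq[symmetric] using card_Diff_subset[OF fin sub] by simp
    moreover have "pcount n {A, tau} \<le> pcount n {A}"
      unfolding pcount_def by (rule card_mono[OF fin_rgf sub])
    ultimately show ?thesis by (simp add: of_nat_diff)
  qed
  have pg: "pgf {A, tau} = pgf {A} - Tf m v 0"
    by (rule fps_ext) (simp add: pgf_def Tf_def cnt tau_eq[symmetric])
  let ?q = "\<lambda>j. fps_X / (1 - of_nat j * fps_X) :: rat fps"
  have "Tf m v 0 = (\<Prod>i\<in>{0..<m-1}. ?q i) * Wf m v" using Tf_formula[of m 0 v] m2 by simp
  also have "\<dots> = ?q 0 * (\<Prod>i\<in>{1..<m-1}. ?q i) * (?q (m-1) ^ (length tau - m) * ?q (m-1)) * inverse (1 - of_nat m * fps_X)"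
    using m2 by (simp add: prod.atLeast_Suc_lessThan Wf_formula[OF sv] lv mult.assoc)
  also have "\<dots> = ?q (m-1) ^ (length tau - m) * ?q m * (\<Prod>j\<in>{1..m-1}. ?q j)"
  proof -
    have "{1..m-1} = {1..<Suc (m-1)}" by auto
    moreover have "(\<Prod>j\<in>{1..<Suc (m-1)}. ?q j) = (\<Prod>i\<in>{1..<m-1}. ?q i) * ?q (m-1)"
      by (rule prod.atLeastLessThan_Suc) (use m2 in simp)
    ultimately have P: "(\<Prod>j\<in>{1..m-1}. ?q j) = (\<Prod>i\<in>{1..<m-1}. ?q i) * ?q (m-1)"
      by simp
    have Q: "?q m = fps_X * inverse (1 - of_nat m * fps_X)" by (rule fps_divide_unit) simp
    have q0: "?q 0 = fps_X" by simp
    show ?thesis unfolding P Q q0 by (rule rearr)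
  qed
  finally show ?thesis using pg unfolding A_def by simp
qed


end
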